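(* Let $p>2$ be a prime and $k$ any field of characteristic $p$. Then $R_1^{(p)}\neq R_2^{(p)}$.
   Context: Let $X=\{x_1,x_2,\ldots\}$ be a countably infinite set and let $k_0\langle X\rangle$ denote the free associative $k$-algebra (without identity) on $X$. A $T$-space of $k_0\langle X\rangle$ is a $k$-linear subspace closed under every algebra endomorphism of $k_0\langle X\rangle$; the $T$-space generated by a subset is the smallest $T$-space containing it. For $v_1,\ldots,v_d\in k_0\langle X\rangle$, let $S_d(v_1,\ldots,v_d)=\sum_{\sigma\in\Sigma_d}\prod_{i=1}^d v_{\sigma(i)}$, where $\Sigma_d$ is the symmetric group on $d$ letters. Let $R_1^{(d)}$ be the $T$-space generated by $S_d(x_1,\ldots,x_d)$, and let $R_2^{(d)}$ be the $T$-space generated by $R_1^{(d)}$ together with all products $u\,S_d(v_1,\ldots,v_d)$ with $u\in R_1^{(d)}$, $v_i\in k_0\langle X\rangle$. *)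

theory Defs
  imports "HOL-Computational_Algebra.Primes" "HOL-Library.Poly_Mapping" "HOL-Combinatorics.Permutations"
begin

text \<open>The free associative algebra k<X> on X = {x_0, x_1, ...} (indexed by nat) is modelled
as finitely supported functions from words (nat list) to k. The free algebra without
identity k_0<X> is the subset FA of elements supported on nonempty words.\<close>

type_synonym 'k fa = "nat list \<Rightarrow>\<^sub>0 'k"

definition FA :: "'k::field fa set" where
  "FA = {f. \<forall>w\<in>Poly_Mapping.keys f. w \<noteq> []}"

definition fvar :: "nat \<Rightarrow> 'k::field fa" where
  "fvar i = Poly_Mapping.single [i] 1"

definition fsmul :: "'k::field \<Rightarrow> 'k fa \<Rightarrow> 'k fa" where
  "fsmul c f = Poly_Mapping.map (\<lambda>a. c * a) f"

definition fmul :: "'k::field fa \<Rightarrow> 'k fa \<Rightarrow> 'k fa" where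
  "fmul f g = (\<Sum>u\<in>Poly_Mapping.keys f. \<Sum>v\<in>Poly_Mapping.keys g. Poly_Mapping.single (u @ v) (Poly_Mapping.lookup f u * Poly_Mapping.lookup g v))"

text \<open>Ordered product of a list of elements (empty product = the unit word, only used
for nonempty lists below).\<close>
fun flistprod :: "'k::field fa list \<Rightarrow> 'k fa" where
  "flistprod [] = Poly_Mapping.single [] 1"
| "flistprod (f # fs) = fmul f (flistprod fs)"

definition fsubst :: "(nat \<Rightarrow> 'k::field fa) \<Rightarrow> 'k fa \<Rightarrow> 'k fa" where
  "fsubst phi f = (\<Sum>w\<in>Poly_Mapping.keys f. fsmul (Poly_Mapping.lookup f w) (flistprod (map phi w)))"

definition is_Tspace :: "'k::field fa set \<Rightarrow> bool" where
  "is_Tspace V \<longleftrightarrow> V \<subseteq> FA \<and> 0 \<in> V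
     \<and> (\<forall>f\<in>V. \<forall>g\<in>V. f + g \<in> V)
     \<and> (\<forall>c. \<forall>f\<in>V. fsmul c f \<in> V)
     \<and> (\<forall>phi. (\<forall>i. phi i \<in> FA) \<longrightarrow> (\<forall>f\<in>V. fsubst phi f \<in> V))"

definition Tspan :: "'k::field fa set \<Rightarrow> 'k fa set" where
  "Tspan S = \<Inter>{V. is_Tspace V \<and> S \<subseteq> V}"

text \<open>S_d(v_1,...,v_d) = sum over sigma in Sigma_d of v_sigma(1) ... v_sigma(d)
(indices shifted to 0..d-1).\<close>
definition Ssym :: "nat \<Rightarrow> (nat \<Rightarrow> 'k::field fa) \<Rightarrow> 'k fa" where
  "Ssym d v = (\<Sum>\<sigma>\<in>{\<sigma>. \<sigma> permutes {..<d}}. flistprod (map (\<lambda>i. v (\<sigma> i)) [0..<d]))"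

definition R1 :: "nat \<Rightarrow> 'k::field fa set" where
  "R1 d = Tspan {Ssym d fvar}"

definition R2 :: "nat \<Rightarrow> 'k::field fa set" where
  "R2 d = Tspan (R1 d \<union> {fmul u (Ssym d v) | u v. u \<in> R1 d \<and> (\<forall>i<d. v i \<in> FA)})"

end

theory Submission
  imports Defs
begin


abbreviation lk where "lk \<equiv> Poly_Mapping.lookup"
abbreviation sg where "sg \<equiv> Poly_Mapping.single"
abbreviation ks where "ks \<equiv> Poly_Mapping.keys"

lemma fmul_alt:
  fixes f g :: "'k::field fa"
  assumes "finite A" "ks f \<subseteq> A" "finite B" "ks g \<subseteq> B"
  shows "fmul f g = (\<Sum>u\<in>A. \<Sum>v\<in>B. sg (u @ v) (lk f u * lk g v))"
proof -
  have "fmul f g = (\<Sum>u\<in>A. \<Sum>v\<in>ks g. sg (u @ v) (lk f u * lk g v))"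
    unfolding fmul_def
    by (rule sum.mono_neutral_left) (use assms in \<open>auto simp: in_keys_iff\<close>)
  then show ?thesis
    by (simp, intro sum.cong[OF refl] sum.mono_neutral_left) (use assms in \<open>auto simp: in_keys_iff\<close>)
qed

lemma fmul_add_left: "fmul (f + g) h = fmul f h + fmul g (h :: 'k::field fa)"
proof -
  let ?A = "ks f \<union> ks g"
  have "fmul (f+g) h = (\<Sum>u\<in>?A. \<Sum>v\<in>ks h. sg (u @ v) (lk (f+g) u * lk h v))"
    by (rule fmul_alt) (auto dest: set_mp[OF keys_add])
  also have "\<dots> = (\<Sum>u\<in>?A. \<Sum>v\<in>ks h. sg (u @ v) (lk f u * lk h v)) + (\<Sum>u\<in>?A. \<Sum>v\<in>ks h. sg (u @ v) (lk g u * lk h v))"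
    by (simp add: lookup_add distrib_right single_add sum.distrib)
  also have "\<dots> = fmul f h + fmul g h"
    by (subst (1 2) fmul_alt[where A="?A" and B="ks h"]) auto
  finally show ?thesis .
qed

lemma fmul_add_right: "fmul h (f + g) = fmul h f + fmul h (g :: 'k::field fa)"
proof -
  let ?A = "ks f \<union> ks g"
  have "fmul h (f+g) = (\<Sum>u\<in>ks h. \<Sum>v\<in>?A. sg (u @ v) (lk h u * lk (f+g) v))"
    by (rule fmul_alt) (auto dest: set_mp[OF keys_add])
  also have "\<dots> = (\<Sum>u\<in>ks h. \<Sum>v\<in>?A. sg (u @ v) (lk h u * lk f v)) + (\<Sum>u\<in>ks h. \<Sum>v\<in>?A. sg (u @ v) (lk h u * lk g v))"
    by (simp add: lookup_add distrib_left single_add sum.distrib)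
  also have "\<dots> = fmul h f + fmul h g"
    by (subst (1 2) fmul_alt[where B="?A" and A="ks h"]) auto
  finally show ?thesis .
qed

lemma fmul_zero_left [simp]: "fmul 0 h = (0 :: 'k::field fa)"
  by (simp add: fmul_def)
lemma fmul_zero_right [simp]: "fmul h 0 = (0 :: 'k::field fa)"
  by (simp add: fmul_def)

lemma fmul_single: "fmul (sg u a) (sg v b) = (sg (u@v) (a*b) :: 'k::field fa)"
  by (subst fmul_alt[where A="{u}" and B="{v}"]) auto

lemma fmul_sum_left: "finite I \<Longrightarrow> fmul (\<Sum>i\<in>I. F i) h = (\<Sum>i\<in>I. fmul (F i) (h :: 'k::field fa))"
  by (induction I rule: finite_induct) (auto simp: fmul_add_left)
lemma fmul_sum_right: "finite I \<Longrightarrow> fmul h (\<Sum>i\<in>I. F i) = (\<Sum>i\<in>I. fmul h (F i :: 'k::field fa))"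
  by (induction I rule: finite_induct) (auto simp: fmul_add_right)

lemma expand: "(f :: 'k::field fa) = (\<Sum>u\<in>ks f. sg u (lk f u))"
  by (rule poly_mapping_eqI) (auto simp: lookup_sum lookup_single when_def in_keys_iff)

lemma fmul_assoc: "fmul (fmul f g) h = fmul f (fmul g (h :: 'k::field fa))"
proof -
  have "fmul (fmul f g) h = fmul (fmul (\<Sum>u\<in>ks f. sg u (lk f u)) (\<Sum>u\<in>ks g. sg u (lk g u))) (\<Sum>u\<in>ks h. sg u (lk h u))"
    by (simp flip: expand)
  also have "\<dots> = (\<Sum>c\<in>ks h. \<Sum>b\<in>ks g. \<Sum>a\<in>ks f. sg (a@b@c) (lk f a * lk g b * lk h c))"
    by (simp add: fmul_sum_left fmul_sum_right fmul_single)
  also have "\<dots> = fmul (\<Sum>u\<in>ks f. sg u (lk f u)) (fmul (\<Sum>u\<in>ks g. sg u (lk g u)) (\<Sum>u\<in>ks h. sg u (lk h u)))"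
    by (simp add: fmul_sum_left fmul_sum_right fmul_single mult.assoc)
  also have "\<dots> = fmul f (fmul g h)"
    by (simp flip: expand)
  finally show ?thesis .
qed

lemma fmul_unit: "fmul (sg [] 1) (g :: 'k::field fa) = g"
proof -
  have "fmul (sg [] 1) g = fmul (sg [] 1) (\<Sum>u\<in>ks g. sg u (lk g u))"
    by (simp flip: expand)
  also have "\<dots> = (\<Sum>u\<in>ks g. sg u (lk g u))"
    by (simp add: fmul_sum_right fmul_single)
  also have "\<dots> = g" by (simp flip: expand)
  finally show ?thesis .
qed

lemma flistprod_append: "flistprod (xs @ ys) = fmul (flistprod xs) (flistprod (ys :: 'k::field fa list))"
  by (induction xs) (auto simp: fmul_unit fmul_assoc)

lemma flistprod_fvar: "flistprod (map fvar xs) = (sg xs 1 :: 'k::field fa)"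
  by (induction xs) (auto simp: fvar_def fmul_single)

definition Lc :: "(nat list \<Rightarrow> 'k::field) \<Rightarrow> 'k fa \<Rightarrow> 'k" where
  "Lc c f = (\<Sum>w\<in>ks f. lk f w * c w)"

lemma Lc_alt: "finite A \<Longrightarrow> ks f \<subseteq> A \<Longrightarrow> Lc c f = (\<Sum>w\<in>A. lk f w * c w)"
  unfolding Lc_def by (rule sum.mono_neutral_left) (auto simp: in_keys_iff)

lemma Lc_add: "Lc c (f + g) = Lc c f + Lc c g"
proof -
  let ?A = "ks f \<union> ks g"
  have "Lc c (f+g) = (\<Sum>w\<in>?A. lk (f+g) w * c w)"
    by (rule Lc_alt) (auto dest: set_mp[OF keys_add])
  also have "\<dots> = (\<Sum>w\<in>?A. lk f w * c w) + (\<Sum>w\<in>?A. lk g w * c w)"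
    by (simp add: lookup_add distrib_right sum.distrib)
  also have "\<dots> = Lc c f + Lc c g"
    by (subst (1 2) Lc_alt[where A="?A"]) auto
  finally show ?thesis .
qed

lemma Lc_zero [simp]: "Lc c 0 = 0" by (simp add: Lc_def)

lemma Lc_single [simp]: "Lc c (sg w a) = a * c w"
  by (subst Lc_alt[where A="{w}"]) auto

lemma Lc_sum: "finite I \<Longrightarrow> Lc c (\<Sum>i\<in>I. F i) = (\<Sum>i\<in>I. Lc c (F i))"
  by (induction I rule: finite_induct) (auto simp: Lc_add)

lemma lookup_fsmul [simp]: "lk (fsmul a f) w = a * lk f w"
  by (simp add: fsmul_def map.rep_eq when_def)

lemma keys_fsmul: "ks (fsmul a f) \<subseteq> ks f"
  by (auto simp: in_keys_iff)

lemma Lc_fsmul: "Lc c (fsmul a f) = a * Lc c f"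
  by (subst (1 2) Lc_alt[where A="ks f"]) (auto simp: keys_fsmul sum_distrib_left mult.assoc)

lemma Lc_fmul: "Lc c (fmul f g) = (\<Sum>u\<in>ks f. \<Sum>v\<in>ks g. lk f u * lk g v * c (u @ v))"
  by (simp add: fmul_def Lc_sum)

definition cyc :: "(nat list \<Rightarrow> 'k) \<Rightarrow> bool" where
  "cyc c \<longleftrightarrow> (\<forall>u v. c (u @ v) = c (v @ u))"

lemma Lc_fmul_comm: "cyc c \<Longrightarrow> Lc c (fmul f g) = Lc c (fmul g f)"
  unfolding Lc_fmul cyc_def
  by (subst sum.swap) (metis (no_types, lifting) mult.commute sum.cong)

lemma Lc_fsubst: "Lc c (fsubst phi f) = (\<Sum>w\<in>ks f. lk f w * Lc c (flistprod (map phi w)))"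
  by (simp add: fsubst_def Lc_sum Lc_fsmul)

lemma cyc_subst: "cyc c \<Longrightarrow> cyc (\<lambda>w. Lc c (flistprod (map phi w)))"
  by (subst cyc_def) (simp add: flistprod_append Lc_fmul_comm)

lemma keys_fmul: "ks (fmul f g) \<subseteq> {u @ v | u v. u \<in> ks f \<and> v \<in> ks g}"
  unfolding fmul_def
  by (rule order.trans[OF keys_sum]) (fastforce dest!: set_mp[OF keys_sum] split: if_splits)

lemma FA_add: "f \<in> FA \<Longrightarrow> g \<in> FA \<Longrightarrow> f + g \<in> FA"
  by (auto simp: FA_def dest: set_mp[OF keys_add])

lemma FA_fsmul: "f \<in> FA \<Longrightarrow> fsmul a f \<in> FA"
  by (auto simp: FA_def dest: set_mp[OF keys_fsmul])

lemma FA_sum: "(\<And>i. i \<in> I \<Longrightarrow> F i \<in> FA) \<Longrightarrow> sum F I \<in> FA"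
  by (auto simp: FA_def dest!: set_mp[OF keys_sum])

lemma FA_fmul: "f \<in> FA \<Longrightarrow> fmul f g \<in> FA"
  by (auto simp: FA_def dest!: set_mp[OF keys_fmul])

lemma FA_flistprod: "xs \<noteq> [] \<Longrightarrow> set xs \<subseteq> FA \<Longrightarrow> flistprod xs \<in> FA"
  by (cases xs) (auto intro: FA_fmul)

lemma FA_fsubst: "f \<in> FA \<Longrightarrow> (\<And>i. phi i \<in> FA) \<Longrightarrow> fsubst phi f \<in> FA"
  unfolding fsubst_def
  by (intro FA_sum FA_fsmul FA_flistprod) (auto simp: FA_def)

definition VV :: "'k::field fa set" where
  "VV = {f \<in> FA. \<forall>c. cyc c \<longrightarrow> Lc c f = 0}"

lemma VV_Tspace: "is_Tspace (VV :: 'k::field fa set)"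
  unfolding is_Tspace_def
proof (intro conjI ballI allI impI)
  show "VV \<subseteq> FA" by (auto simp: VV_def)
  show "0 \<in> VV" by (auto simp: VV_def FA_def)
next
  fix f g :: "'k fa" assume "f \<in> VV" "g \<in> VV" then show "f + g \<in> VV"
    by (auto simp: VV_def Lc_add FA_add)
next
  fix a and f :: "'k fa" assume "f \<in> VV" then show "fsmul a f \<in> VV"
    by (auto simp: VV_def Lc_fsmul FA_fsmul)
next
  fix phi :: "nat \<Rightarrow> 'k fa" and f :: "'k fa" assume phi: "\<forall>i. phi i \<in> FA" and f: "f \<in> VV"
  show "fsubst phi f \<in> VV"
    unfolding VV_def
  proof (intro CollectI conjI allI impI)
    show "fsubst phi f \<in> FA" using f phi by (intro FA_fsubst) (auto simp: VV_def)
    fix c :: "nat list \<Rightarrow> 'k" assume "cyc c"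
    then have "cyc (\<lambda>w. Lc c (flistprod (map phi w)))" by (rule cyc_subst)
    then have "Lc (\<lambda>w. Lc c (flistprod (map phi w))) f = 0" using f by (auto simp: VV_def)
    then show "Lc c (fsubst phi f) = 0" by (simp add: Lc_fsubst Lc_def[of _ f])
  qed
qed



definition rj :: "nat \<Rightarrow> nat \<Rightarrow> nat \<Rightarrow> nat" where
  "rj p j i = (if i < p then (i + j) mod p else i)"

lemma rj_comp: "0 < p \<Longrightarrow> rj p a (rj p b i) = rj p (a + b) i"
  unfolding rj_def by (simp add: mod_add_right_eq ac_simps)

lemma rj_dvd: "p dvd n \<Longrightarrow> rj p n = id"
  by (auto simp: rj_def fun_eq_iff)

lemma rj_permutes: assumes "0 < p" shows "rj p j permutes {..<p}"
proof -
  let ?g = "rj p (p - j mod p)"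
  have m: "j mod p < p" using assms by simp
  have e: "(p - j mod p + j) mod p = (p - j mod p + j mod p) mod p" by (simp add: mod_add_right_eq)
  also have "\<dots> = 0" using m by simp
  finally have dv: "p dvd (p - j mod p + j)" "p dvd (j + (p - j mod p))"
    by (auto simp: add.commute dvd_eq_mod_eq_0)
  have 1: "?g (rj p j x) = x" for x using rj_comp[OF assms] rj_dvd[OF dv(1)] by simp
  have 2: "rj p j (?g x) = x" for x using rj_comp[OF assms] rj_dvd[OF dv(2)] by simp
  show ?thesis unfolding permutes_def
  proof (intro conjI allI impI)
    show "x \<notin> {..<p} \<Longrightarrow> rj p j x = x" for x by (simp add: rj_def)
    show "\<exists>!x. rj p j x = y" for y by (rule ex1I[of _ "?g y"]) (use 1 2 in metis)+
  qed
qed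

lemma cyc_rotate: "cyc c \<Longrightarrow> c (rotate j w) = c w"
  by (metis append_take_drop_id cyc_def rotate_drop_take)

lemma map_rj: "0 < p \<Longrightarrow> map (\<sigma> \<circ> rj p j) [0..<p] = rotate j (map \<sigma> [0..<p])"
proof (rule nth_equalityI)
  fix i assume "0 < p" "i < length (map (\<sigma> \<circ> rj p j) [0..<p])"
  then show "map (\<sigma> \<circ> rj p j) [0..<p] ! i = rotate j (map \<sigma> [0..<p]) ! i"
    by (simp add: nth_rotate rj_def add.commute)
qed simp

lemma perm_sum_zero:
  fixes c :: "nat list \<Rightarrow> 'k::field"
  assumes p: "0 < p" and ch: "of_nat p = (0::'k)" and cy: "cyc c"
  shows "(\<Sum>\<sigma>\<in>{\<sigma>. \<sigma> permutes {..<p}}. c (map \<sigma> [0..<p])) = 0"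
proof -
  define D where "D = {\<sigma>. \<sigma> permutes {..<p}}"
  define D0 where "D0 = {\<sigma>\<in>D. \<sigma> 0 = 0}"
  define G where "G \<sigma> = c (map \<sigma> [0..<p])" for \<sigma>
  define Phi :: "nat \<times> (nat \<Rightarrow> nat) \<Rightarrow> nat \<Rightarrow> nat" where "Phi = (\<lambda>(j, \<tau>). \<tau> \<circ> rj p j)"
  define Psi :: "(nat \<Rightarrow> nat) \<Rightarrow> nat \<times> (nat \<Rightarrow> nat)" where "Psi \<sigma> = ((p - inv \<sigma> 0) mod p, \<sigma> \<circ> rj p (inv \<sigma> 0))" for \<sigma>
  have dvd1: "p dvd (x + (p - x) mod p)" if "x < p" for x
    using that by (cases "x = 0") auto
  have bij: "bij_betw Phi ({..<p} \<times> D0) D"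
  proof (rule bij_betw_byWitness[where f'=Psi])
    show "\<forall>a\<in>{..<p} \<times> D0. Psi (Phi a) = a"
    proof
      fix a assume "a \<in> {..<p} \<times> D0"
      then obtain j \<tau> where a: "a = (j, \<tau>)" "j < p" "\<tau> permutes {..<p}" "\<tau> 0 = 0"
        by (auto simp: D0_def D_def)
      define x where "x = (p - j) mod p"
      have xp: "x < p" using p by (simp add: x_def)
      have jx: "p dvd (j + x)" using a(2) by (cases "j = 0") (auto simp: x_def)
      have sx: "(\<tau> \<circ> rj p j) x = 0"
        using a jx xp by (auto simp: rj_def add.commute dvd_eq_mod_eq_0)
      have perm: "\<tau> \<circ> rj p j permutes {..<p}" by (rule permutes_compose[OF rj_permutes[OF p] a(3)])
      have inv: "inv (\<tau> \<circ> rj p j) 0 = x" using permutes_inv_eq[OF perm] sx by blast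
      have "(p - x) mod p = j" using a(2) by (cases "j = 0") (auto simp: x_def)
      moreover have "\<tau> \<circ> rj p j \<circ> rj p x = \<tau>"
        using rj_comp[OF p] rj_dvd[OF jx] by (auto simp: fun_eq_iff)
      ultimately show "Psi (Phi a) = a" by (simp add: Psi_def Phi_def a inv)
    qed
    show "\<forall>a'\<in>D. Phi (Psi a') = a'"
    proof
      fix \<sigma> assume "\<sigma> \<in> D"
      then have s: "\<sigma> permutes {..<p}" by (simp add: D_def)
      have "inv \<sigma> 0 < p" using permutes_in_image[OF permutes_inv[OF s]] p by auto
      then have "p dvd (inv \<sigma> 0 + (p - inv \<sigma> 0) mod p)" by (rule dvd1)
      then show "Phi (Psi \<sigma>) = \<sigma>"
        using rj_comp[OF p] rj_dvd by (auto simp: Phi_def Psi_def fun_eq_iff)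
    qed
    show "Phi ` ({..<p} \<times> D0) \<subseteq> D"
      by (auto simp: Phi_def D0_def D_def intro: permutes_compose[OF rj_permutes[OF p]])
    show "Psi ` D \<subseteq> {..<p} \<times> D0"
    proof
      fix y assume "y \<in> Psi ` D"
      then obtain \<sigma> where s: "\<sigma> permutes {..<p}" and y: "y = Psi \<sigma>" by (auto simp: D_def)
      have ip: "inv \<sigma> 0 < p" using permutes_in_image[OF permutes_inv[OF s]] p by auto
      have "(\<sigma> \<circ> rj p (inv \<sigma> 0)) 0 = 0"
        using ip p permutes_inverses(1)[OF s] by (simp add: rj_def)
      then show "y \<in> {..<p} \<times> D0"
        using p s by (auto simp: y Psi_def D0_def D_def intro: permutes_compose[OF rj_permutes[OF p]])
    qed
  qed
  have finD0: "finite D0" by (simp add: D0_def D_def finite_permutations)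
  have "(\<Sum>\<sigma>\<in>D. G \<sigma>) = (\<Sum>a\<in>{..<p} \<times> D0. G (Phi a))"
    by (rule sum.reindex_bij_betw[OF bij, symmetric])
  also have "\<dots> = (\<Sum>a\<in>{..<p} \<times> D0. G (snd a))"
    by (rule sum.cong[OF refl]) (auto simp: Phi_def G_def map_rj[OF p] cyc_rotate[OF cy])
  also have "\<dots> = (\<Sum>j\<in>{..<p}. \<Sum>\<tau>\<in>D0. G \<tau>)"
    by (subst sum.cartesian_product) (simp add: split_def)
  also have "\<dots> = of_nat p * (\<Sum>\<tau>\<in>D0. G \<tau>)" by simp
  also have "\<dots> = 0" using ch by simp
  finally show ?thesis by (simp add: D_def G_def)
qed



lemma Ssym_shift: "Ssym p (\<lambda>i. fvar (m + i)) = (\<Sum>\<sigma>\<in>{\<sigma>. \<sigma> permutes {..<p}}. sg (map (\<lambda>i. m + \<sigma> i) [0..<p]) (1::'k::field))"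
proof -
  have "flistprod (map (\<lambda>i. fvar (m + \<sigma> i)) [0..<p]) = (sg (map (\<lambda>i. m + \<sigma> i) [0..<p]) (1::'k))" for \<sigma>
    using flistprod_fvar[of "map (\<lambda>i. m + \<sigma> i) [0..<p]"] by (simp add: o_def)
  then show ?thesis by (simp add: Ssym_def)
qed

lemma Ssym_fvar: "Ssym p fvar = (\<Sum>\<sigma>\<in>{\<sigma>. \<sigma> permutes {..<p}}. sg (map \<sigma> [0..<p]) (1::'k::field))"
  using Ssym_shift[of p 0] by simp

lemma Tspan_sub: "S \<subseteq> Tspan S"
  by (auto simp: Tspan_def)

lemma Tspan_least: "is_Tspace V \<Longrightarrow> S \<subseteq> V \<Longrightarrow> Tspan S \<subseteq> V"
  by (auto simp: Tspan_def)

lemma Ssym_VV: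
  assumes p: "0 < p" and ch: "of_nat p = (0::'k::field)"
  shows "(Ssym p fvar :: 'k fa) \<in> VV"
  unfolding VV_def
proof (intro CollectI conjI allI impI)
  show "(Ssym p fvar :: 'k fa) \<in> FA"
    unfolding Ssym_fvar using p by (intro FA_sum) (auto simp: FA_def)
  fix c :: "nat list \<Rightarrow> 'k" assume "cyc c"
  then show "Lc c (Ssym p fvar) = 0"
    unfolding Ssym_fvar by (simp add: Lc_sum finite_permutations perm_sum_zero[OF p ch])
qed

definition c0 :: "nat \<Rightarrow> nat list \<Rightarrow> 'k::field" where
  "c0 p w = (if \<exists>j. w = rotate j [0..<2*p] then 1 else 0)"

lemma cyc_c0: "cyc (c0 p)"
proof -
  have *: "(\<exists>j. u @ v = rotate j [0..<2*p]) \<Longrightarrow> (\<exists>j. v @ u = rotate j [0..<2*p])" for u v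
  proof -
    assume "\<exists>j. u @ v = rotate j [0..<2*p]"
    then obtain j where "u @ v = rotate j [0..<2*p]" by blast
    then have "v @ u = rotate (length u) (rotate j [0..<2*p])" by (metis rotate_append)
    then show ?thesis by (auto simp: rotate_rotate)
  qed
  show ?thesis unfolding cyc_def c0_def
  proof (intro allI)
    fix u v show "(if \<exists>j. u @ v = rotate j [0..<2*p] then 1 else 0) = (if \<exists>j. v @ u = rotate j [0..<2*p] then 1 else (0::'a))"
      using *[of u v] *[of v u] by auto
  qed
qed

lemma key:
  assumes s: "\<sigma> permutes {..<p}" and t: "\<tau> permutes {..<p}" and p: "0 < p"
    and eq: "map \<sigma> [0..<p] @ map (\<lambda>i. p + \<tau> i) [0..<p] = rotate j [0..<2*p]"
  shows "\<sigma> = id \<and> \<tau> = id"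
proof -
  define n where "n = 2 * p"
  define j' where "j' = j mod n"
  have jn: "j' < n" using p by (simp add: j'_def n_def)
  have bound: "(j' + i) mod n < p" if "i < p" for i
  proof -
    have "(map \<sigma> [0..<p] @ map (\<lambda>i. p + \<tau> i) [0..<p]) ! i = \<sigma> i"
      using that by (simp add: nth_append)
    moreover have "\<sigma> i < p" using permutes_in_image[OF s] that by simp
    moreover have "rotate j [0..<2*p] ! i = (j + i) mod n"
      using that by (simp add: nth_rotate n_def)
    ultimately show ?thesis using eq by (simp add: j'_def mod_add_left_eq)
  qed
  have "j' = 0"
  proof (rule ccontr)
    assume "j' \<noteq> 0"
    show False
    proof (cases "j' < p")
      case True
      have "(j' + (p - 1)) mod n = j' + (p - 1)" using True p by (simp add: n_def)
      then show False using bound[of "p - 1"] p \<open>j' \<noteq> 0\<close> by simp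
    next
      case False
      then show False using bound[of 0] p jn by simp
    qed
  qed
  then have "rotate j [0..<2*p] = [0..<2*p]"
    using rotate_conv_mod[of j "[0..<2*p]"] by (simp add: j'_def n_def)
  also have "\<dots> = [0..<p] @ map (\<lambda>i. p + i) [0..<p]"
    using upt_add_eq_append[of 0 p p] map_add_upt[of p p] by (simp add: mult_2 add.commute)
  finally have "map \<sigma> [0..<p] = [0..<p] \<and> map (\<lambda>i. p + \<tau> i) [0..<p] = map (\<lambda>i. p + i) [0..<p]"
    using eq by (simp add: append_eq_append_conv)
  then have m1: "map \<sigma> [0..<p] = [0..<p]" and m2: "map (\<lambda>i. p + \<tau> i) [0..<p] = map (\<lambda>i. p + i) [0..<p]"
    by auto
  have a: "\<forall>i<p. \<sigma> i = i" "\<forall>i<p. \<tau> i = i"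
  proof (safe)
    fix i assume "i < p"
    then show "\<sigma> i = i" using arg_cong[OF m1, of "\<lambda>l. l ! i"] by simp
    show "\<tau> i = i" using \<open>i < p\<close> arg_cong[OF m2, of "\<lambda>l. l ! i"] by simp
  qed
  have "\<sigma> x = x" for x using a(1) permutes_not_in[OF s, of x] by (cases "x < p") auto
  moreover have "\<tau> x = x" for x using a(2) permutes_not_in[OF t, of x] by (cases "x < p") auto
  ultimately show ?thesis by (simp add: fun_eq_iff)
qed

lemma w0split: "[0..<2*p] = [0..<p] @ map (\<lambda>i. p + i) [0..<p]"
  using upt_add_eq_append[of 0 p p] map_add_upt[of p p] by (simp add: mult_2 add.commute)

theorem theorem5p1:
  fixes p :: nat
  assumes "prime p" and "p > 2" and "CHAR('k::field) = p"
  shows "(R1 p :: 'k fa set) \<noteq> R2 p"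
proof
  assume eq: "(R1 p :: 'k fa set) = R2 p"
  have p: "0 < p" using assms(2) by simp
  have ch: "of_nat p = (0::'k)" using assms(3) of_nat_CHAR[where 'a='k] by simp
  define D where "D = {\<sigma>. \<sigma> permutes {..<p}}"
  have finD: "finite D" by (simp add: D_def finite_permutations)
  let ?T = "fmul (Ssym p fvar) (Ssym p (\<lambda>i. fvar (p + i))) :: 'k fa"
  have S1: "(Ssym p fvar :: 'k fa) \<in> R1 p" unfolding R1_def using Tspan_sub by blast
  have "?T \<in> R2 p" unfolding R2_def
  proof (rule set_mp[OF Tspan_sub], rule UnI2, rule CollectI, intro exI conjI)
    show "?T = fmul (Ssym p fvar) (Ssym p (\<lambda>i. fvar (p + i)))" by (rule refl)
    show "(Ssym p fvar :: 'k fa) \<in> R1 p" by (rule S1)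
    show "\<forall>i<p. fvar (p + i) \<in> (FA :: 'k fa set)" by (auto simp: fvar_def FA_def)
  qed
  then have "?T \<in> R1 p" using eq by simp
  moreover have "R1 p \<subseteq> (VV :: 'k fa set)" unfolding R1_def
    by (rule Tspan_least[OF VV_Tspace]) (use Ssym_VV[OF p ch] in simp)
  ultimately have "?T \<in> VV" by blast
  then have z: "Lc (c0 p) ?T = 0" using cyc_c0 by (auto simp: VV_def)
  have "?T = (\<Sum>\<sigma>\<in>D. \<Sum>\<tau>\<in>D. sg (map \<sigma> [0..<p] @ map (\<lambda>i. p + \<tau> i) [0..<p]) 1)"
    unfolding Ssym_fvar Ssym_shift D_def[symmetric]
    by (simp add: fmul_sum_left fmul_sum_right fmul_single finD) (rule sum.swap)
  then have "Lc (c0 p) ?T = (\<Sum>\<sigma>\<in>D. \<Sum>\<tau>\<in>D. c0 p (map \<sigma> [0..<p] @ map (\<lambda>i. p + \<tau> i) [0..<p]))"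
    by (simp add: Lc_sum finD)
  also have "\<dots> = (\<Sum>\<sigma>\<in>D. \<Sum>\<tau>\<in>D. if \<sigma> = id then (if \<tau> = id then 1 else 0) else (0::'k))"
  proof (intro sum.cong refl)
    fix \<sigma> \<tau> assume "\<sigma> \<in> D" "\<tau> \<in> D"
    then have s: "\<sigma> permutes {..<p}" and t: "\<tau> permutes {..<p}" by (auto simp: D_def)
    show "c0 p (map \<sigma> [0..<p] @ map (\<lambda>i. p + \<tau> i) [0..<p]) = (if \<sigma> = id then (if \<tau> = id then 1 else 0) else (0::'k))"
    proof (cases "\<sigma> = id \<and> \<tau> = id")
      case True
      then show ?thesis unfolding c0_def using w0split[of p]
        by (auto intro: exI[of _ 0])
    next
      case False
      then show ?thesis unfolding c0_def using key[OF s t p] by auto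
    qed
  qed
  also have "\<dots> = 1"
  proof -
    have "id \<in> D" by (simp add: D_def permutes_id)
    have i: "(\<Sum>\<tau>\<in>D. if \<tau> = id then 1 else (0::'k)) = 1"
      using sum.delta[OF finD, of id "\<lambda>_. (1::'k)"] \<open>id \<in> D\<close> by simp
    have "(\<Sum>\<sigma>\<in>D. \<Sum>\<tau>\<in>D. if \<sigma> = id then (if \<tau> = id then 1 else 0) else (0::'k))
        = (\<Sum>\<sigma>\<in>D. if \<sigma> = id then (\<Sum>\<tau>\<in>D. if \<tau> = id then 1 else 0) else (0::'k))"
      by (rule sum.cong) auto
    also have "\<dots> = 1" using sum.delta[OF finD, of id "\<lambda>_. (\<Sum>\<tau>\<in>D. if \<tau> = id then 1 else (0::'k))"] \<open>id \<in> D\<close> i by simp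
    finally show ?thesis .
  qed
  finally show False using z by simp
qed

end
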